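(* Let $m \le n$, let $1 \le h \le k \le m$, and let $|v\rangle \in \mathcal{H}_n \otimes \mathcal{H}_m$ be a unit vector with $SR(|v\rangle) \le k$. Then there exist nonnegative real constants $d_1,\dots,d_k$ and (not necessarily distinct) unit vectors $|v_1\rangle,\dots,|v_k\rangle \in \mathcal{H}_n\otimes\mathcal{H}_m$ such that: - $\sum_{j=1}^k d_j^2 = h$; - $SR(|v_j\rangle) \le h$ for all $j$; - $h|v\rangle = \sum_{j=1}^k d_j |v_j\rangle$.
   Context: $\mathcal{H}_d = \mathbb{C}^d$ and $m \le n$. $SR(|v\rangle)$ is the Schmidt rank of $|v\rangle$: the least number of terms $|a\rangle\otimes|b\rangle$ needed to write $|v\rangle$ as a linear combination of such terms, equivalently the rank of its $n\times m$ coefficient matrix. *)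

theory Defs
  imports "HOL-Analysis.Analysis"
begin

text \<open>A vector in H_n (x) H_m is represented by its n x m complex coefficient
  matrix (type complex^'m^'n, with n = CARD('n), m = CARD('m)).  The norm of
  this type is the Euclidean (Frobenius) norm, i.e. the Hilbert space norm.\<close>

definition schmidt_rank :: "complex^'m^'n \<Rightarrow> nat" where
  "schmidt_rank v = rank v"

end

theory Submission
  imports Defs
begin

definition cinner :: "complex^'m \<Rightarrow> complex^'m \<Rightarrow> complex" where
  "cinner x y = (\<Sum>b\<in>UNIV. x$b * cnj (y$b))"

lemma cinner_add_left: "cinner (x + y) z = cinner x z + cinner y z"
  by (simp add: cinner_def distrib_right sum.distrib)
lemma cinner_diff_left: "cinner (x - y) z = cinner x z - cinner y z"
  by (simp add: cinner_def left_diff_distrib sum_subtractf)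
lemma cinner_scale_left: "cinner (c *s x) z = c * cinner x z"
  by (simp add: cinner_def sum_distrib_left mult.assoc)
lemma cinner_zero_left [simp]: "cinner 0 x = 0"
  by (simp add: cinner_def)
lemma cinner_sum_left: "cinner (sum f A) z = (\<Sum>a\<in>A. cinner (f a) z)"
  by (induction A rule: infinite_finite_induct) (auto simp: cinner_add_left)
lemma cinner_commute: "cinner y x = cnj (cinner x y)"
  by (simp add: cinner_def mult.commute)
lemma cinner_zero_right [simp]: "cinner x 0 = 0"
  by (simp add: cinner_def)
lemma cinner_self: "cinner x x = complex_of_real ((norm x)^2)"
proof -
  have "cinner x x = (\<Sum>b\<in>UNIV. complex_of_real ((cmod (x$b))^2))"
    unfolding cinner_def by (rule sum.cong) (simp_all add: complex_mult_cnj cmod_power2 flip: of_real_power)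
  also have "\<dots> = complex_of_real (\<Sum>b\<in>UNIV. (cmod (x$b))^2)" by simp
  also have "(\<Sum>b\<in>UNIV. (cmod (x$b))^2) = (norm x)^2"
    by (simp add: norm_vec_def L2_set_def sum_nonneg)
  finally show ?thesis .
qed

lemma norm_axis_gen: "norm (axis i (x::'a::real_normed_vector)) = norm x"
proof -
  have "(\<Sum>j\<in>UNIV. (norm (axis i x $ j))^2) = (\<Sum>j\<in>UNIV. if j = i then (norm x)^2 else 0)"
    by (rule sum.cong) (auto simp: axis_def)
  then show ?thesis by (simp add: norm_vec_def L2_set_def)
qed

lemma inner_scale_vec:
  fixes e e' :: "complex^'m"
  shows "inner (c *s e) (c' *s e') = Re (c * cnj c' * cinner e e')"
  apply (simp add: inner_vec_def cinner_def sum_distrib_left inner_complex_def Re_sum[symmetric])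
  apply (rule sum.cong, simp)
  apply (simp add: algebra_simps)
  done
  
definition orthonormal_c :: "(complex^'m) set \<Rightarrow> bool" where
  "orthonormal_c E \<longleftrightarrow> (\<forall>e\<in>E. cinner e e = 1) \<and> (\<forall>e\<in>E. \<forall>e'\<in>E. e \<noteq> e' \<longrightarrow> cinner e e' = 0)"

lemma proj_expand:
  assumes "finite E" "orthonormal_c E" "x \<in> vec.span E"
  shows "x = (\<Sum>e\<in>E. cinner x e *s e)"
proof -
  obtain u where u: "x = (\<Sum>v\<in>E. u v *s v)"
    using assms(3) vec.span_finite[OF assms(1)] by auto
  have c: "cinner x e0 = u e0" if "e0 \<in> E" for e0
  proof -
    have "cinner x e0 = (\<Sum>v\<in>E. u v * cinner v e0)"
      by (simp add: u cinner_sum_left cinner_scale_left)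
    also have "\<dots> = u e0 * cinner e0 e0 + (\<Sum>v\<in>E-{e0}. u v * cinner v e0)"
      using assms(1) that by (simp add: sum.remove)
    also have "(\<Sum>v\<in>E-{e0}. u v * cinner v e0) = 0"
      using assms(2) that by (intro sum.neutral) (auto simp: orthonormal_c_def)
    finally show ?thesis using assms(2) that by (simp add: orthonormal_c_def)
  qed
  have "(\<Sum>e\<in>E. cinner x e *s e) = (\<Sum>e\<in>E. u e *s e)"
    by (rule sum.cong) (simp_all add: c)
  then show ?thesis using u by simp
qed

lemma gram_schmidt_c:
  fixes S :: "(complex^'m) set"
  assumes "finite S"
  shows "\<exists>E. finite E \<and> card E \<le> card S \<and> orthonormal_c E \<and> S \<subseteq> vec.span E"
  using assms
proof (induction S rule: finite_induct)
  case empty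
  then show ?case by (intro exI[of _ "{}"]) (auto simp: orthonormal_c_def)
next
  case (insert x S)
  then obtain E where E: "finite E" "card E \<le> card S" "orthonormal_c E" "S \<subseteq> vec.span E"
    by blast
  show ?case
  proof (cases "x \<in> vec.span E")
    case True
    then show ?thesis using E insert by (intro exI[of _ E]) auto
  next
    case False
    define y where "y = x - (\<Sum>e\<in>E. cinner x e *s e)"
    have ysp: "x = y + (\<Sum>e\<in>E. cinner x e *s e)" by (simp add: y_def)
    have y0: "y \<noteq> 0"
    proof
      assume "y = 0"
      then have "x = (\<Sum>e\<in>E. cinner x e *s e)" unfolding y_def by (metis right_minus_eq)
      also have "\<dots> \<in> vec.span E"
        by (intro vec.span_sum vec.span_scale vec.span_base)
      finally show False using False by simp
    qed
    have yorth: "cinner y e0 = 0" if "e0 \<in> E" for e0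
    proof -
      have "cinner (\<Sum>e\<in>E. cinner x e *s e) e0 = (\<Sum>e\<in>E. cinner x e * cinner e e0)"
        by (simp add: cinner_sum_left cinner_scale_left)
      also have "\<dots> = cinner x e0 * cinner e0 e0 + (\<Sum>e\<in>E-{e0}. cinner x e * cinner e e0)"
        using E(1) that by (simp add: sum.remove)
      also have "(\<Sum>e\<in>E-{e0}. cinner x e * cinner e e0) = 0"
        using E(3) that by (intro sum.neutral) (auto simp: orthonormal_c_def)
      finally show ?thesis using E(3) that by (simp add: y_def cinner_diff_left orthonormal_c_def)
    qed
    define u where "u = complex_of_real (1 / norm y) *s y"
    have ny: "norm y \<noteq> 0" using y0 by simp
    have uu: "cinner u u = 1"
    proof -
      have h1: "cinner u y = complex_of_real (1 / norm y) * complex_of_real ((norm y)^2)"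
        by (simp add: u_def cinner_scale_left cinner_self)
      have h3: "cinner u u = complex_of_real (1 / norm y) * cinner y u"
        by (subst (1) u_def) (simp add: cinner_scale_left)
      have "cinner u u = complex_of_real (1 / norm y) * cnj (cinner u y)"
        using h3 cinner_commute[of y u] by simp
      also have "\<dots> = complex_of_real ((1 / norm y) * ((1 / norm y) * (norm y)^2))"
        by (simp add: h1)
      also have "\<dots> = 1" using ny by (simp add: field_simps power2_eq_square)
      finally show ?thesis .
    qed
    have ue1: "cinner u e0 = 0" if "e0 \<in> E" for e0
      using yorth[OF that] unfolding u_def by (simp add: cinner_scale_left)
    have ue: "cinner u e0 = 0" "cinner e0 u = 0" if "e0 \<in> E" for e0
      using ue1[OF that] cinner_commute[of e0 u] by simp_all
    have uE: "u \<notin> E" using ue(1)[of u] uu by auto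
    have on: "orthonormal_c (insert u E)"
      using E(3) uu ue unfolding orthonormal_c_def by auto
    have yu: "y = complex_of_real (norm y) *s u"
      using ny by (simp add: u_def vector_smult_assoc[symmetric] of_real_mult[symmetric] del: of_real_mult)
    have "x \<in> vec.span (insert u E)"
    proof -
      have "y \<in> vec.span (insert u E)" by (subst yu) (intro vec.span_scale vec.span_base, simp)
      moreover have "(\<Sum>e\<in>E. cinner x e *s e) \<in> vec.span (insert u E)"
        by (intro vec.span_sum vec.span_scale vec.span_base) simp
      ultimately show ?thesis by (subst ysp) (rule vec.span_add)
    qed
    moreover have "S \<subseteq> vec.span (insert u E)"
      using E(4) vec.span_mono[of E "insert u E"] by auto
    ultimately show ?thesis
      using E insert uE on by (intro exI[of _ "insert u E"]) auto
  qed
qed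

lemma mod_cancel_add: "((a::nat) + t) mod k = (b + t) mod k \<Longrightarrow> a mod k = b mod k"
  using nat_mod_eq_iff by auto

lemma shift_bij:
  assumes "0 < k"
  shows "bij_betw (\<lambda>j. (j + t) mod k) {..<(k::nat)} {..<k}"
proof -
  have inj: "inj_on (\<lambda>j. (j + t) mod k) {..<k}"
  proof (rule inj_onI)
    fix a b assume a: "a \<in> {..<k}" and b: "b \<in> {..<k}" and e: "(a + t) mod k = (b + t) mod k"
    from e have "a mod k = b mod k" by (rule mod_cancel_add)
    then show "a = b" using a b by simp
  qed
  moreover have "(\<lambda>j. (j + t) mod k) ` {..<k} \<subseteq> {..<k}" using assms by auto
  ultimately have "(\<lambda>j. (j + t) mod k) ` {..<k} = {..<k}"
    by (intro endo_inj_surj) auto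
  with inj show ?thesis by (simp add: bij_betw_def)
qed

lemma sum_shift:
  assumes "0 < k"
  shows "(\<Sum>j<k. f ((j + t) mod k)) = (\<Sum>j<(k::nat). (f j :: 'a::comm_monoid_add))"
  using sum.reindex_bij_betw[OF shift_bij[OF assms, of t], of f] by simp

lemma sum_1_k: "(\<Sum>j=1..k. f (j - 1)) = (\<Sum>j<(k::nat). (f j :: 'a::comm_monoid_add))"
  by (induction k) (auto simp: add.commute)

lemma rank_le_span:
  fixes x :: "complex^'m^'n"
  assumes "\<And>i. x $ i \<in> vec.span T" "finite T"
  shows "schmidt_rank x \<le> card T"
proof -
  have "rows x \<subseteq> vec.span T" using assms(1) by (auto simp: rows_def row_def)
  then show ?thesis unfolding schmidt_rank_def row_rank_def_gen
    using vec.dim_le_card[OF _ assms(2)] by blast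
qed

lemma scaleR_vec_smult: "(c::real) *\<^sub>R (x::complex^'m) = complex_of_real c *s x"
  by (simp add: vec_eq_iff scaleR_conv_of_real[where 'a=complex])

lemma sum_shift':
  assumes "0 < k"
  shows "(\<Sum>j<k. f ((t + j) mod k)) = (\<Sum>j<(k::nat). (f j :: 'a::comm_monoid_add))"
  using sum_shift[OF assms, of f t] by (simp add: add.commute)

theorem lemma4p12:
  fixes v :: "complex^'m^'n" and h k :: nat
  assumes "CARD('m) \<le> CARD('n)"
    and "1 \<le> h" and "h \<le> k" and "k \<le> CARD('m)"
    and "norm v = 1"
    and "schmidt_rank v \<le> k"
  shows "\<exists>(d :: nat \<Rightarrow> real) (w :: nat \<Rightarrow> complex^'m^'n).
           (\<forall>j\<in>{1..k}. 0 \<le> d j \<and> norm (w j) = 1 \<and> schmidt_rank (w j) \<le> h)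
         \<and> (\<Sum>j=1..k. (d j)^2) = real h
         \<and> real h *\<^sub>R v = (\<Sum>j=1..k. d j *\<^sub>R w j)"
proof -
  have k0: "0 < k" using assms(2,3) by simp
  have rowa: "row a v = v $ a" for a by (simp add: row_def)
  have finrows: "finite (rows v)"
  proof -
    have "rows v = range (\<lambda>i. row i v)" by (auto simp: rows_def)
    then show ?thesis by simp
  qed
  obtain B where B: "B \<subseteq> rows v" "rows v \<subseteq> vec.span B" "card B = vec.dim (rows v)"
    using vec.basis_exists[of "rows v"] by metis
  have finB: "finite B" using B(1) finrows finite_subset by blast
  obtain E where E: "finite E" "card E \<le> card B" "orthonormal_c E" "B \<subseteq> vec.span E"
    using gram_schmidt_c[OF finB] by blast
  have rowsE: "v $ a \<in> vec.span E" for a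
  proof -
    have "v $ a \<in> rows v" unfolding rows_def mem_Collect_eq by (intro exI[of _ a]) (simp add: rowa)
    then have "v $ a \<in> vec.span B" using B(2) by blast
    moreover have "vec.span B \<subseteq> vec.span E" using E(4) by (metis vec.span_mono vec.span_span)
    ultimately show ?thesis by blast
  qed
  define r where "r = card E"
  have rk: "r \<le> k" using E(2) B(3) assms(6) unfolding r_def schmidt_rank_def row_rank_def_gen by simp
  obtain g where g: "bij_betw g {0..<r} E" using ex_bij_betw_nat_finite[OF E(1)] r_def by blast
  define uu where "uu i = (if i < r then g i else 0)" for i
  define P where "P i = (\<chi> a. cinner (v $ a) (uu i) *s uu i)" for i
  have Pa: "P i $ a = cinner (v $ a) (uu i) *s uu i" for i a by (simp add: P_def)
  have uu_orth: "cinner (uu i) (uu j) = 0" if "i \<noteq> j" for i j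
  proof (cases "i < r \<and> j < r")
    case True
    then have "g i \<noteq> g j" "g i \<in> E" "g j \<in> E" using g that by (auto simp: bij_betw_def inj_on_def)
    then show ?thesis using E(3) True by (auto simp: uu_def orthonormal_c_def)
  next
    case False
    then show ?thesis by (auto simp: uu_def)
  qed
  have P_orth: "orthogonal (P i) (P j)" if "i \<noteq> j" for i j
    unfolding orthogonal_def inner_vec_def[of "P i" "P j"] Pa inner_scale_vec uu_orth[OF that] by simp
  have v_sum: "v = (\<Sum>i<k. P i)"
  proof (rule vec_eq_iff[THEN iffD2], rule allI)
    fix a
    have "(\<Sum>i<k. P i) $ a = (\<Sum>i<k. cinner (v $ a) (uu i) *s uu i)" by (simp add: sum_component Pa)
    also have "\<dots> = (\<Sum>i<r. cinner (v $ a) (uu i) *s uu i)"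
    proof -
      have "{..<k} = {..<r} \<union> {r..<k}" using rk by auto
      then have "(\<Sum>i<k. cinner (v $ a) (uu i) *s uu i) = (\<Sum>i<r. cinner (v $ a) (uu i) *s uu i) + (\<Sum>i\<in>{r..<k}. cinner (v $ a) (uu i) *s uu i)"
        by (simp add: sum.union_disjoint[of "{..<r}" "{r..<k}"] ivl_disj_int)
      moreover have "(\<Sum>i\<in>{r..<k}. cinner (v $ a) (uu i) *s uu i) = 0" by (auto simp: uu_def intro!: sum.neutral)
      ultimately show ?thesis by simp
    qed
    also have "\<dots> = (\<Sum>i<r. cinner (v $ a) (g i) *s g i)" by (auto simp: uu_def intro!: sum.cong)
    also have "\<dots> = (\<Sum>e\<in>E. cinner (v $ a) e *s e)"
      using sum.reindex_bij_betw[OF g, of "\<lambda>e. cinner (v $ a) e *s e"] by (simp add: lessThan_atLeast0)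
    also have "\<dots> = v $ a" by (rule proj_expand[OF E(1) E(3) rowsE[of a], symmetric])
    finally show "v $ a = (\<Sum>i<k. P i) $ a" by simp
  qed
  have normv: "(\<Sum>i<k. (norm (P i))^2) = 1"
  proof -
    have "(norm (\<Sum>i<k. P i))^2 = (\<Sum>i<k. (norm (P i))^2)"
      by (rule norm_sum_Pythagorean) (auto simp: pairwise_def P_orth)
    then show ?thesis using assms(5) v_sum by simp
  qed
  define I where "I j = (\<lambda>t. (t + j) mod k) ` {..<h}" for j
  have injI: "inj_on (\<lambda>t. (t + j) mod k) {..<h}" for j
    by (rule inj_on_subset[OF bij_betw_imp_inj_on[OF shift_bij[OF k0]]]) (use assms(3) in auto)
  define S where "S j = (\<Sum>t<h. P ((t + j) mod k))" for j
  have SI: "S j = (\<Sum>i\<in>I j. P i)" for j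
    unfolding S_def I_def by (simp add: sum.reindex[OF injI])
  have normS: "(norm (S j))^2 = (\<Sum>t<h. (norm (P ((t + j) mod k)))^2)" for j
  proof -
    have "(norm (S j))^2 = (\<Sum>i\<in>I j. (norm (P i))^2)"
      unfolding SI by (rule norm_sum_Pythagorean) (auto simp: I_def pairwise_def P_orth)
    also have "\<dots> = (\<Sum>t<h. (norm (P ((t + j) mod k)))^2)"
      unfolding I_def by (simp add: sum.reindex[OF injI])
    finally show ?thesis .
  qed
  have sumS: "(\<Sum>j<k. S j) = real h *\<^sub>R v"
  proof -
    have "(\<Sum>j<k. S j) = (\<Sum>t<h. \<Sum>j<k. P ((t + j) mod k))" unfolding S_def by (rule sum.swap)
    also have "\<dots> = (\<Sum>t<h. \<Sum>j<k. P j)" using sum_shift'[OF k0, of P] by simp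
    also have "\<dots> = real h *\<^sub>R v" by (simp only: sum_constant_scaleR card_lessThan flip: v_sum)
    finally show ?thesis .
  qed
  have sumS2: "(\<Sum>j<k. (norm (S j))^2) = real h"
  proof -
    have "(\<Sum>j<k. (norm (S j))^2) = (\<Sum>t<h. \<Sum>j<k. (norm (P ((t + j) mod k)))^2)"
      unfolding normS by (rule sum.swap)
    also have "\<dots> = (\<Sum>t<h. \<Sum>j<k. (norm (P j))^2)"
      using sum_shift'[OF k0, of "\<lambda>i. (norm (P i))^2"] by simp
    also have "\<dots> = real h" using normv by simp
    finally show ?thesis .
  qed
  define T where "T j = (\<lambda>t. uu ((t + j) mod k)) ` {..<h}" for j
  have rankS: "schmidt_rank (c *\<^sub>R S j) \<le> h" for c j
  proof -
    have "schmidt_rank (c *\<^sub>R S j) \<le> card (T j)"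
    proof (rule rank_le_span)
      show "finite (T j)" by (simp add: T_def)
      fix a
      have "S j $ a \<in> vec.span (T j)"
        unfolding S_def sum_component Pa T_def
        by (intro vec.span_sum vec.span_scale vec.span_base) auto
      then show "(c *\<^sub>R S j) $ a \<in> vec.span (T j)"
        by (simp add: scaleR_vec_smult vec.span_scale)
    qed
    also have "card (T j) \<le> h" unfolding T_def using card_image_le[of "{..<h}"] by simp
    finally show ?thesis .
  qed
  define M0 :: "complex^'m^'n" where "M0 = axis undefined (axis undefined 1)"
  have M0n: "norm M0 = 1" by (simp add: M0_def norm_axis_gen)
  have M0r: "schmidt_rank M0 \<le> h"
  proof -
    have M0i: "M0 $ i = (if i = undefined then axis undefined 1 else 0)" for i
      by (simp add: M0_def axis_def)
    have "schmidt_rank M0 \<le> card {axis (undefined::'m) (1::complex)}"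
      by (rule rank_le_span) (auto simp: M0i vec.span_base vec.span_zero)
    then show ?thesis using assms(2) by simp
  qed
  define D where "D j = norm (S j)" for j
  define W where "W j = (if S j = 0 then M0 else (1 / D j) *\<^sub>R S j)" for j
  have DW: "D j *\<^sub>R W j = S j" for j by (auto simp: W_def D_def)
  have Wn: "norm (W j) = 1" for j using M0n by (auto simp: W_def D_def)
  have Wr: "schmidt_rank (W j) \<le> h" for j using M0r rankS by (auto simp: W_def)
  show ?thesis
  proof (rule exI[of _ "\<lambda>j. D (j - 1)"], rule exI[of _ "\<lambda>j. W (j - 1)"], intro conjI ballI)
    fix j show "0 \<le> D (j - 1)" by (simp add: D_def)
    show "norm (W (j - 1)) = 1" by (rule Wn)
    show "schmidt_rank (W (j - 1)) \<le> h" by (rule Wr)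
  next
    show "(\<Sum>j=1..k. (D (j - 1))^2) = real h"
      using sum_1_k[of "\<lambda>j. (D j)^2" k] sumS2 by (simp add: D_def)
  next
    show "real h *\<^sub>R v = (\<Sum>j=1..k. D (j - 1) *\<^sub>R W (j - 1))"
      using sum_1_k[of "\<lambda>j. D j *\<^sub>R W j" k] sumS by (simp add: DW)
  qed
qed

end
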